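(* Let $(Z_i)_{i\in\mathbb N}$ be independent with $Z_i\sim N(\mu r_i,1)$, where $\mu>0$ and $r_i\in\{0,1\}$ are fixed, and let $p_i=1-\Phi(Z_i)$. Let $\alpha,\beta\in(0,1)$ and a threshold $c$ be fixed. Consider the online adaptively ordered martingale test with threshold $c$: hypothesis $t$ is included in the set $M$ iff $|Z_t|>c$ (equivalently $\Phi^{-1}(1-g(p_t))>c$), and the test rejects iff at some time the current set $M$ with $K=|M|\ge1$ satisfies $\sum_{i\in M}h(p_i)>C_K^\alpha K^{1/2}$. This test has power at least $1-\beta$ if there exists $k\in\mathbb N$ such that $$(2S(\mu;c)-1)\left(N_1(k)-\frac{C_k^{\beta/3}\sqrt{N_1(k)}}{2\mathbb P(|Z(\mu)|>c)}\right)\ \ge\ \frac{C_k^\alpha+C_k^{\beta/3}}{\mathbb P^{1/2}(|Z(\mu)|>c)}\left[N_1(k)+D^{-1}(c)N_0(k)+\frac{C_k^{\beta/3}k^{1/2}}{2\mathbb P(|Z(\mu)|>c)}\right]^{1/2}.$$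
   Context: $\Phi$ is the standard Gaussian CDF; $h(p)=2\cdot\mathbf 1\{p<0.5\}-1$, $g(p)=\min\{p,1-p\}$. $Z(\nu)$ denotes a $N(\nu,1)$ random variable. For $\gamma\in(0,1)$, $k\ge1$: $C_k^\gamma=1.7\sqrt{\log\log(2k)+0.72\log\frac{5.2}{\gamma}}$. $D(c)=\frac{\mathbb P(|Z(\mu)|>c)}{\mathbb P(|Z(0)|>c)}$, $S(\mu;c)=\mathbb P(Z(\mu)>0\mid |Z(\mu)|>c)$, $N_1(k)=\sum_{i=1}^kr_i$, $N_0(k)=\sum_{i=1}^k(1-r_i)$. Power is the probability of rejection. *)

theory Defs
  imports "HOL-Probability.Probability"
begin

definition Nlaw :: "real \<Rightarrow> real measure" where
  "Nlaw m = density lborel (normal_density m 1)"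

definition Phi :: "real \<Rightarrow> real" where
  "Phi x = measure (Nlaw 0) {..x}"

definition hfun :: "real \<Rightarrow> real" where
  "hfun p = 2 * (if p < 1/2 then 1 else 0) - 1"

definition gfun :: "real \<Rightarrow> real" where
  "gfun p = min p (1 - p)"

definition Ccrit :: "nat \<Rightarrow> real \<Rightarrow> real" where
  "Ccrit k \<gamma> = 1.7 * sqrt (ln (ln (2 * real k)) + 0.72 * ln (5.2 / \<gamma>))"

definition Pabs :: "real \<Rightarrow> real \<Rightarrow> real" where
  "Pabs \<mu> c = measure (Nlaw \<mu>) {x. \<bar>x\<bar> > c}"

definition Dfun :: "real \<Rightarrow> real \<Rightarrow> real" where
  "Dfun \<mu> c = Pabs \<mu> c / Pabs 0 c"

definition Sfun :: "real \<Rightarrow> real \<Rightarrow> real" where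
  "Sfun \<mu> c = measure (Nlaw \<mu>) {x. x > 0 \<and> \<bar>x\<bar> > c} / Pabs \<mu> c"

definition N1 :: "(nat \<Rightarrow> nat) \<Rightarrow> nat \<Rightarrow> real" where
  "N1 r k = (\<Sum>i=1..k. real (r i))"

definition N0 :: "(nat \<Rightarrow> nat) \<Rightarrow> nat \<Rightarrow> real" where
  "N0 r k = (\<Sum>i=1..k. 1 - real (r i))"

definition selected :: "(nat \<Rightarrow> real) \<Rightarrow> real \<Rightarrow> nat \<Rightarrow> nat set" where
  "selected z c t = {i \<in> {1..t}. \<bar>z i\<bar> > c}"

definition rejects :: "real \<Rightarrow> real \<Rightarrow> (nat \<Rightarrow> real) \<Rightarrow> bool" where
  "rejects \<alpha> c z \<longleftrightarrow> (\<exists>t. let Mt = selected z c t; K = card Mt in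
      K \<ge> 1 \<and> (\<Sum>i\<in>Mt. hfun (1 - Phi (z i))) > Ccrit K \<alpha> * sqrt (real K))"

end

theory Submission
  imports Defs
begin


lemma two_point_hoeffding:
  fixes q l :: real
  assumes q: "0 \<le> q" "q \<le> 1" and l: "l > 0"
  shows "q * exp (- l * (1 - (2*q-1))) + (1-q) * exp (l * (1 + (2*q-1))) \<le> exp (l^2/2)"
proof -
  define N where "N = measure_pmf (bernoulli_pmf q)"
  define f where "f = (\<lambda>b::bool. if b then (-1::real) else 1)"
  interpret interval_bounded_random_variable N f "-1" 1
    by unfold_locales (auto simp: N_def f_def)
  have E: "expectation f = 1 - 2*q"
    unfolding N_def
    by (subst integral_measure_pmf_real[where A=UNIV]) (use q in \<open>auto simp: f_def UNIV_bool\<close>)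
  have "nn_integral N (\<lambda>x. exp (l * (f x - expectation f))) \<le> ennreal (exp (l\<^sup>2 * (1 - -1)\<^sup>2 / 8))"
    by (rule Hoeffdings_lemma_nn_integral) (use l in auto)
  also have "nn_integral N (\<lambda>x. exp (l * (f x - expectation f))) =
     ennreal (q * exp (- l * (1 - (2*q-1))) + (1-q) * exp (l * (1 + (2*q-1))))"
    unfolding N_def E
    by (subst nn_integral_measure_pmf_support[where A=UNIV])
       (use q in \<open>auto simp: f_def UNIV_bool ennreal_mult'[symmetric] ennreal_plus[symmetric] simp del: ennreal_plus intro!: arg_cong[where f=ennreal]\<close>; simp add: algebra_simps)+
  finally show ?thesis
    by (subst (asm) ennreal_le_iff) (auto simp: power2_eq_square)
qed



lemma Nlaw_prob: "prob_space (Nlaw m)"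
  unfolding Nlaw_def by (rule prob_space_normal_density) simp

lemma sets_Nlaw[simp, measurable_cong]: "sets (Nlaw m) = sets borel"
  by (simp add: Nlaw_def)

lemma space_Nlaw[simp]: "space (Nlaw m) = UNIV"
  by (simp add: Nlaw_def)

lemma emeasure_Nlaw:
  "A \<in> sets borel \<Longrightarrow> emeasure (Nlaw m) A = (\<integral>\<^sup>+x. ennreal (normal_density m 1 x) * indicator A x \<partial>lborel)"
  unfolding Nlaw_def by (subst emeasure_density) auto

lemma emeasure_Nlaw_fin: "emeasure (Nlaw m) A \<noteq> \<top>"
proof -
  have "finite_measure (Nlaw m)" using Nlaw_prob prob_space_def by blast
  then show ?thesis by (rule finite_measure.emeasure_finite)
qed

lemma Nlaw_pos:
  assumes A: "A \<in> sets borel" and pos: "emeasure lborel A > 0"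
  shows "measure (Nlaw m) A > 0"
proof -
  have "emeasure (Nlaw m) A \<noteq> 0"
  proof
    assume "emeasure (Nlaw m) A = 0"
    then have "AE x in lborel. ennreal (normal_density m 1 x) * indicator A x = 0"
      using A by (subst (asm) emeasure_Nlaw) (auto simp: nn_integral_0_iff_AE)
    then have "AE x in lborel. x \<notin> A"
    proof (rule eventually_mono)
      fix x assume "ennreal (normal_density m 1 x) * indicator A x = 0"
      then show "x \<notin> A" using normal_density_pos[of 1 m x] by (auto split: split_indicator)
    qed
    then have "emeasure lborel A = 0"
      using A by (subst (asm) AE_iff_measurable[where N=A]) auto
    with pos show False by simp
  qed
  then show ?thesis
    using emeasure_Nlaw_fin[of m A] by (simp add: measure_def enn2real_positive_iff zero_less_iff_neq_zero top.not_eq_extremum)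
qed

lemma normal_density_neg: "normal_density m 1 (-x) = normal_density (-m) 1 x"
  by (simp add: normal_density_def power2_eq_square algebra_simps)

lemma Nlaw_refl:
  assumes A: "A \<in> sets borel"
  shows "measure (Nlaw m) (uminus -` A) = measure (Nlaw (-m)) A"
proof -
  have "emeasure (Nlaw m) (uminus -` A) = (\<integral>\<^sup>+x. ennreal (normal_density m 1 x) * indicator (uminus -` A) x \<partial>lborel)"
  proof (intro emeasure_Nlaw)
    have "(uminus::real\<Rightarrow>real) \<in> borel_measurable borel" by simp
    from measurable_sets[OF this A] show "uminus -` A \<in> sets borel" by simp
  qed
  also have "\<dots> = (\<integral>\<^sup>+x. (\<lambda>y. ennreal (normal_density (-m) 1 y) * indicator A y) (-x) \<partial>lborel)"
    by (intro nn_integral_cong) (auto simp: normal_density_neg split: split_indicator)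
  also have "\<dots> = (\<integral>\<^sup>+y. ennreal (normal_density (-m) 1 y) * indicator A y \<partial>distr lborel borel uminus)"
    using A by (subst nn_integral_distr) auto
  also have "\<dots> = emeasure (Nlaw (-m)) A"
    using A by (simp add: lborel_distr_uminus emeasure_Nlaw)
  finally show ?thesis by (simp add: measure_def)
qed

lemma Nlaw_cmp:
  assumes m: "m \<ge> 0" and A: "A \<in> sets borel" "A \<subseteq> {0..}"
  shows "measure (Nlaw (-m)) A \<le> measure (Nlaw m) A"
proof -
  have "emeasure (Nlaw (-m)) A \<le> emeasure (Nlaw m) A"
    unfolding emeasure_Nlaw[OF A(1)]
  proof (intro nn_integral_mono)
    fix x show "ennreal (normal_density (-m) 1 x) * indicator A x \<le> ennreal (normal_density m 1 x) * indicator A x"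
    proof (cases "x \<in> A")
      case True
      then have "x \<ge> 0" using A by auto
      then have "(x - m)^2 \<le> (x - - m)^2" using m by (simp add: power2_eq_square algebra_simps)
      then have "normal_density (-m) 1 x \<le> normal_density m 1 x"
        by (simp add: normal_density_def divide_right_mono)
      then show ?thesis using True by (simp add: ennreal_leI)
    qed simp
  qed
  then show ?thesis using emeasure_Nlaw_fin[of m A] unfolding measure_def
    by (intro enn2real_mono) (auto simp: top.not_eq_extremum)
qed

lemma Nlaw_single: "measure (Nlaw m) {x} = 0"
proof -
  have "emeasure (Nlaw m) {x} = 0"
    by (subst emeasure_Nlaw) (auto intro!: nn_integral_null_set[THEN trans] simp: nn_integral_0_iff_AE)
  then show ?thesis by (simp add: measure_def)
qed



lemma Nlaw_union:
  assumes "A \<in> sets borel" "B \<in> sets borel" "A \<inter> B = {}"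
  shows "measure (Nlaw m) (A \<union> B) = measure (Nlaw m) A + measure (Nlaw m) B"
proof -
  interpret N: prob_space "Nlaw m" by (rule Nlaw_prob)
  show ?thesis using assms by (intro N.finite_measure_Union) auto
qed

lemma Nlaw_mono:
  assumes "A \<subseteq> B" "B \<in> sets borel"
  shows "measure (Nlaw m) A \<le> measure (Nlaw m) B"
proof -
  interpret N: prob_space "Nlaw m" by (rule Nlaw_prob)
  show ?thesis using assms by (intro N.finite_measure_mono) auto
qed

lemma Nlaw_UNIV: "measure (Nlaw m) UNIV = 1"
proof -
  interpret N: prob_space "Nlaw m" by (rule Nlaw_prob)
  show ?thesis using N.prob_space by simp
qed

lemma Phi0: "Phi 0 = 1/2"
proof -
  have a: "measure (Nlaw 0) {..0} = measure (Nlaw 0) {0..}"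
  proof -
    have "{..0::real} = uminus -` {0..}" by auto
    then show ?thesis using Nlaw_refl[of "{0..}" 0] by simp
  qed
  have b: "measure (Nlaw 0) {..0} + measure (Nlaw 0) {0<..} = 1"
  proof -
    have "{..0::real} \<union> {0<..} = UNIV" by auto
    moreover have "{..0::real} \<inter> {0<..} = {}" by auto
    ultimately show ?thesis using Nlaw_union[of "{..0::real}" "{0<..}" 0] Nlaw_UNIV[of 0] by auto
  qed
  have c: "measure (Nlaw 0) {0..} = measure (Nlaw 0) {0<..}"
  proof -
    have "{0::real..} = {0} \<union> {0<..}" by auto
    then show ?thesis using Nlaw_union[of "{0::real}" "{0<..}" 0] Nlaw_single[of 0 0] by auto
  qed
  show ?thesis unfolding Phi_def using a b c by simp
qed

lemma Phi_pos: assumes "z > 0" shows "Phi z > 1/2"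
proof -
  have "{..z} = {..0} \<union> {0<..z}" using assms by auto
  then have "Phi z = Phi 0 + measure (Nlaw 0) {0<..z}"
    unfolding Phi_def using Nlaw_union[of "{..0::real}" "{0<..z}" 0] by (auto simp: disjoint_iff)
  moreover have "measure (Nlaw 0) {0<..z} > 0"
    using assms by (intro Nlaw_pos) auto
  ultimately show ?thesis using Phi0 by simp
qed

lemma Phi_nonpos: assumes "z \<le> 0" shows "Phi z \<le> 1/2"
  using Nlaw_mono[of "{..z}" "{..0}" 0] assms Phi0 unfolding Phi_def by auto

lemma hfun_Phi: "hfun (1 - Phi z) = (if z > 0 then 1 else -1)"
  using Phi_pos[of z] Phi_nonpos[of z] by (cases "z > 0") (auto simp: hfun_def)

lemma Pabs_pos: "Pabs m c > 0"
proof -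
  have "measure (Nlaw m) {\<bar>c\<bar><..<\<bar>c\<bar>+1} > 0"
    by (intro Nlaw_pos) auto
  also have "\<dots> \<le> Pabs m c" unfolding Pabs_def
    by (intro Nlaw_mono) auto
  finally show ?thesis .
qed

lemma Pabs_split:
  "Pabs m c = measure (Nlaw m) {x. x > 0 \<and> \<bar>x\<bar> > c} + measure (Nlaw m) {x. x \<le> 0 \<and> \<bar>x\<bar> > c}"
proof -
  have "{x. \<bar>x\<bar> > c} = {x. x > 0 \<and> \<bar>x\<bar> > c} \<union> {x::real. x \<le> 0 \<and> \<bar>x\<bar> > c}" by auto
  then show ?thesis unfolding Pabs_def by (subst Nlaw_union[symmetric]) auto
qed

lemma neg_half_le:
  assumes m: "m \<ge> 0"
  shows "measure (Nlaw m) {x. x \<le> 0 \<and> \<bar>x\<bar> > c} \<le> measure (Nlaw m) {x. x > 0 \<and> \<bar>x\<bar> > c}"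
proof -
  have "measure (Nlaw m) {x. x \<le> 0 \<and> \<bar>x\<bar> > c} \<le> measure (Nlaw m) ({x. x < 0 \<and> \<bar>x\<bar> > c} \<union> {0})"
    by (intro Nlaw_mono) auto
  also have "\<dots> = measure (Nlaw m) {x. x < 0 \<and> \<bar>x\<bar> > c}"
    by (subst Nlaw_union) (auto simp: Nlaw_single)
  also have "{x. x < 0 \<and> \<bar>x\<bar> > c} = uminus -` {x::real. x > 0 \<and> \<bar>x\<bar> > c}" by auto
  also have "measure (Nlaw m) \<dots> = measure (Nlaw (-m)) {x. x > 0 \<and> \<bar>x\<bar> > c}"
    by (rule Nlaw_refl) auto
  also have "\<dots> \<le> measure (Nlaw m) {x. x > 0 \<and> \<bar>x\<bar> > c}"
    using m by (intro Nlaw_cmp) auto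
  finally show ?thesis .
qed

lemma Sfun_half: "m \<ge> 0 \<Longrightarrow> Sfun m c \<ge> 1/2"
  using neg_half_le[of m c] Pabs_split[of m c] Pabs_pos[of m c]
  by (simp add: Sfun_def field_simps)

lemma Sfun_le1: "Sfun m c \<le> 1"
  using Pabs_split[of m c] Pabs_pos[of m c]
    measure_nonneg[of "Nlaw m" "{x. x \<le> 0 \<and> \<bar>x\<bar> > c}"]
  by (simp add: Sfun_def field_simps)

lemma Sfun0: "Sfun 0 c = 1/2"
proof -
  have "measure (Nlaw (-0)) {x. x \<le> 0 \<and> \<bar>x\<bar> > c} = measure (Nlaw 0) {x. x > 0 \<and> \<bar>x\<bar> > c}"
  proof -
    have "measure (Nlaw 0) {x. x \<le> 0 \<and> \<bar>x\<bar> > c} \<ge> measure (Nlaw 0) {x. x > 0 \<and> \<bar>x\<bar> > c}"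
    proof -
      have "measure (Nlaw (-0)) {x. x > 0 \<and> \<bar>x\<bar> > c} = measure (Nlaw 0) (uminus -` {x. x > 0 \<and> \<bar>x\<bar> > c})"
        by (rule Nlaw_refl[symmetric]) auto
      also have "\<dots> \<le> measure (Nlaw 0) {x. x \<le> 0 \<and> \<bar>x\<bar> > c}"
        by (intro Nlaw_mono) auto
      finally show ?thesis by simp
    qed
    then show ?thesis using neg_half_le[of 0 c] by simp
  qed
  then show ?thesis using Pabs_split[of 0 c] Pabs_pos[of 0 c] by (simp add: Sfun_def field_simps)
qed



lemma lnln_lower: assumes "k \<ge> (1::nat)" shows "ln (ln (2 * real k)) \<ge> - 1/2"
proof -
  have "ln 2 \<ge> (2/3::real)" by (rule ln2_ge_two_thirds)
  moreover have "ln (2 * real k) \<ge> ln 2" using assms by simp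
  ultimately have h: "ln (2 * real k) \<ge> 2/3" by linarith
  have "ln (2/3::real) \<ge> -1/2"
  proof -
    have "exp (1/2::real) \<ge> 1 + 1/2" by (rule exp_ge_add_one_self)
    then have "ln (3/2::real) \<le> ln (exp (1/2))" by (subst ln_le_cancel_iff) auto
    then have "ln (3/2::real) \<le> 1/2" by simp
    then show ?thesis by (simp add: ln_div)
  qed
  also have "ln (2/3) \<le> ln (ln (2 * real k))" using h by (subst ln_le_cancel_iff) auto
  finally show ?thesis .
qed

lemma ln52: "ln (5.2::real) \<ge> 1"
proof -
  have "exp (1::real) \<le> 3" by (rule exp_le)
  then show ?thesis by (subst ln_ge_iff) auto
qed

lemma Ccrit_inner_pos:
  assumes "k \<ge> 1" "0 < \<gamma>" "\<gamma> < 1"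
  shows "ln (ln (2 * real k)) + 0.72 * ln (5.2 / \<gamma>) > 0"
proof -
  have "ln (5.2 / \<gamma>) \<ge> ln 5.2" using assms by (subst ln_le_cancel_iff) (auto simp: field_simps)
  then have y: "ln (5.2 / \<gamma>) \<ge> 1" using ln52 by linarith
  have aux: "L \<ge> -1/2 \<Longrightarrow> y \<ge> 1 \<Longrightarrow> 0 < L + 0.72 * (y::real)" for L y by simp
  show ?thesis by (rule aux[OF lnln_lower[OF assms(1)] y])
qed

lemma Ccrit_pos: "k \<ge> 1 \<Longrightarrow> 0 < \<gamma> \<Longrightarrow> \<gamma> < 1 \<Longrightarrow> Ccrit k \<gamma> > 0"
  using Ccrit_inner_pos by (simp add: Ccrit_def)

lemma Ccrit_exp:
  assumes "k \<ge> 1" "0 < \<gamma>" "\<gamma> < 1"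
  shows "exp (- ((Ccrit k \<gamma>)^2) / 2) \<le> \<gamma>"
proof -
  define L where "L = ln (ln (2 * real k))"
  have Cs: "(Ccrit k \<gamma>)^2 = 2.89 * (L + 0.72 * ln (5.2 / \<gamma>))"
  proof -
    define X where "X = L + 0.72 * ln (5.2 / \<gamma>)"
    have C: "Ccrit k \<gamma> = 1.7 * sqrt X" by (simp add: Ccrit_def X_def L_def)
    have "(sqrt X)^2 = X"
      using Ccrit_inner_pos[OF assms] unfolding X_def L_def by (intro real_sqrt_pow2) linarith
    then have "(Ccrit k \<gamma>)^2 = 2.89 * X" unfolding C by (simp add: power_divide power_mult_distrib)
    then show ?thesis by (simp add: X_def)
  qed
  have l1: "ln (5.2 / \<gamma>) = ln 5.2 - ln \<gamma>" using assms ln_div[of "5.2" \<gamma>] by simp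
  have l2: "ln (5.2 / \<gamma>) \<ge> 0" using assms by simp
  have "(Ccrit k \<gamma>)^2 / 2 \<ge> - ln \<gamma>"
  proof -
    have aux: "C2 = 2.89*(L + 0.72*y) \<Longrightarrow> y = l52 - lg \<Longrightarrow> lg \<le> 0 \<Longrightarrow> L \<ge> -1/2 \<Longrightarrow> l52 \<ge> 1 \<Longrightarrow> - lg \<le> C2/(2::real)" for C2 L y l52 lg
      by (simp add: field_simps)
    have "ln \<gamma> \<le> 0" using assms by simp
    then show ?thesis using aux[OF Cs l1 _ lnln_lower[OF assms(1), folded L_def] ln52] by simp
  qed
  then have "exp (- ((Ccrit k \<gamma>)^2) / 2) \<le> exp (ln \<gamma>)" by simp
  then show ?thesis using assms by simp
qed

lemma Ccrit_mono:
  assumes "1 \<le> K" "K \<le> k"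
  shows "Ccrit K \<gamma> \<le> Ccrit k \<gamma>"
proof -
  have "ln (2 * real K) > 0" using assms by simp
  moreover have "ln (2 * real K) \<le> ln (2 * real k)" using assms by simp
  ultimately have "ln (ln (2 * real K)) \<le> ln (ln (2 * real k))" by simp
  then show ?thesis unfolding Ccrit_def by (simp add: real_sqrt_le_mono)
qed



definition sgnp :: "real \<Rightarrow> real" where "sgnp z = (if z > 0 then 1 else -1)"

lemma sgnp_meas[measurable]: "sgnp \<in> borel_measurable borel"
  unfolding sgnp_def by measurable

lemma Nlaw_int_two:
  "integral\<^sup>L (Nlaw m) (\<lambda>z. e1 * indicator A z + e2 * indicator B z) = e1 * measure (Nlaw m) A + e2 * measure (Nlaw m) B"
  if "A \<in> sets borel" "B \<in> sets borel"
proof -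
  have f: "emeasure (Nlaw m) X < \<infinity>" for X using emeasure_Nlaw_fin[of m X] by (simp add: top.not_eq_extremum)
  have iA: "integrable (Nlaw m) (\<lambda>z. e1 * indicat_real A z)" "integrable (Nlaw m) (\<lambda>z. e2 * indicat_real B z)"
    using that f by (auto intro!: integrable_mult_right integrable_real_indicator)
  show ?thesis unfolding Bochner_Integration.integral_add[OF iA] by simp
qed

lemma EG_in:
  fixes l mm :: real
  assumes l: "l > 0" and mm: "mm = 2 * Sfun m c - 1"
  shows "integral\<^sup>L (Nlaw m) (\<lambda>z. if \<bar>z\<bar> > c then exp (- l * (sgnp z - mm) - l^2/2) else 0) \<le> Pabs m c"
proof -
  define a where "a = measure (Nlaw m) {x. x > 0 \<and> \<bar>x\<bar> > c}"
  define b where "b = measure (Nlaw m) {x. x \<le> 0 \<and> \<bar>x\<bar> > c}"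
  define p where "p = Pabs m c"
  define q where "q = Sfun m c"
  have p: "p = a + b" "p > 0" unfolding p_def a_def b_def using Pabs_split Pabs_pos by auto
  have q: "q = a / p" unfolding q_def Sfun_def a_def p_def ..
  have ab: "a = q * p" "b = (1 - q) * p" using p q by (auto simp: field_simps)
  have q01: "0 \<le> q" "q \<le> 1" using Sfun_le1[of m c] Pabs_pos[of m c] unfolding q_def Sfun_def by auto
  define e1 where "e1 = exp (- l * (1 - mm) - l^2/2)"
  define e2 where "e2 = exp (- l * (-1 - mm) - l^2/2)"
  have "(\<lambda>z. if \<bar>z\<bar> > c then exp (- l * (sgnp z - mm) - l^2/2) else 0) =
        (\<lambda>z. e1 * indicator {x. x > 0 \<and> \<bar>x\<bar> > c} z + e2 * indicator {x. x \<le> 0 \<and> \<bar>x\<bar> > c} z)"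
    by (auto simp: e1_def e2_def sgnp_def fun_eq_iff split: split_indicator)
  then have "integral\<^sup>L (Nlaw m) (\<lambda>z. if \<bar>z\<bar> > c then exp (- l * (sgnp z - mm) - l^2/2) else 0)
      = e1 * a + e2 * b"
    by (simp add: Nlaw_int_two a_def b_def)
  also have "\<dots> = p * exp (- (l^2)/2) * (q * exp (- l * (1 - (2*q-1))) + (1-q) * exp (l * (1 + (2*q-1))))"
  proof -
    have "e1 = exp (- (l^2)/2) * exp (- l * (1 - (2*q-1)))"
      unfolding e1_def mm q_def[symmetric] by (simp add: exp_add[symmetric] algebra_simps)
    moreover have "e2 = exp (- (l^2)/2) * exp (l * (1 + (2*q-1)))"
      unfolding e2_def mm q_def[symmetric] by (simp add: exp_add[symmetric] algebra_simps)
    ultimately show ?thesis unfolding ab by (simp add: algebra_simps)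
  qed
  also have "\<dots> \<le> p * exp (- (l^2)/2) * exp (l^2/2)"
    using two_point_hoeffding[OF q01 l] p by (intro mult_left_mono) auto
  also have "\<dots> = p" by (simp add: exp_minus field_simps)
  finally show ?thesis by (simp add: p_def)
qed

lemma EG_out:
  "integral\<^sup>L (Nlaw m) (\<lambda>z. if \<bar>z\<bar> > c then 0 else 1) = 1 - Pabs m c"
proof -
  have "(\<lambda>z. if \<bar>z\<bar> > c then 0 else 1) = (\<lambda>z. (1::real) * indicator {x. \<bar>x\<bar> \<le> c} z + 0 * indicator {} z)"
    by (auto simp: fun_eq_iff split: split_indicator)
  then have "integral\<^sup>L (Nlaw m) (\<lambda>z. if \<bar>z\<bar> > c then 0 else 1) = measure (Nlaw m) {x. \<bar>x\<bar> \<le> c}"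
    by (simp add: Nlaw_int_two)
  also have "\<dots> = 1 - Pabs m c"
  proof -
    have "UNIV = {x. \<bar>x\<bar> \<le> c} \<union> {x::real. \<bar>x\<bar> > c}" by auto
    then have "measure (Nlaw m) UNIV = measure (Nlaw m) {x. \<bar>x\<bar> \<le> c} + Pabs m c"
      unfolding Pabs_def by (subst Nlaw_union[symmetric]) auto
    then show ?thesis using Nlaw_UNIV by simp
  qed
  finally show ?thesis .
qed



lemma sum_filter_real: "finite I \<Longrightarrow> (\<Sum>i\<in>I. if P i then 1 else 0) = real (card {i\<in>I. P i})"
  by (simp add: sum.If_cases Int_def)

lemma G_bound:
  fixes l mm z :: real
  assumes "l \<ge> 0"
  shows "exp (- l * (sgnp z - mm) - l^2/2) \<le> exp (l * (1 + \<bar>mm\<bar>))"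
proof -
  have "- l * (sgnp z - mm) \<le> l * (1 + \<bar>mm\<bar>)"
  proof -
    have "- (sgnp z - mm) \<le> 1 + \<bar>mm\<bar>" by (auto simp: sgnp_def)
    from mult_left_mono[OF this assms] show ?thesis by (simp add: algebra_simps)
  qed
  moreover have "l^2/2 \<ge> 0" by simp
  ultimately have "- l * (sgnp z - mm) - l^2/2 \<le> l * (1 + \<bar>mm\<bar>)" by linarith
  then show ?thesis by (subst exp_le_cancel_iff)
qed

lemma (in prob_space) A3_bound:
  fixes Z :: "nat \<Rightarrow> 'a \<Rightarrow> real" and I :: "nat set" and m :: "nat \<Rightarrow> real" and C c :: real
  assumes fin: "finite I" and indep: "indep_vars (\<lambda>_. borel) Z I"
    and law: "\<And>i. i \<in> I \<Longrightarrow> distr M borel (Z i) = Nlaw (m i)"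
    and C: "C > 0"
  shows "prob {\<omega>\<in>space M. (\<Sum>i\<in>I. if \<bar>Z i \<omega>\<bar> > c then 1 else 0) \<ge> (1::real) \<and>
     (\<Sum>i\<in>I. if \<bar>Z i \<omega>\<bar> > c then sgnp (Z i \<omega>) - (2 * Sfun (m i) c - 1) else 0)
        \<le> - C * sqrt (\<Sum>i\<in>I. if \<bar>Z i \<omega>\<bar> > c then 1 else 0)} \<le> exp (- (C^2)/2)"
    (is "prob ?A \<le> _")
proof -
  have rv[measurable]: "Z i \<in> borel_measurable M" if "i \<in> I" for i
    using indep that unfolding indep_vars_def by auto
  define mm where "mm i = 2 * Sfun (m i) c - 1" for i
  define lam where "lam s = C / sqrt (real (card s))" for s :: "nat set"
  define G where "G s i z = (if i \<in> s then (if \<bar>z\<bar> > c then exp (- lam s * (sgnp z - mm i) - (lam s)^2/2) else 0)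
      else (if \<bar>z\<bar> > c then 0 else 1))" for s i z
  define F where "F s \<omega> = (\<Prod>i\<in>I. G s i (Z i \<omega>))" for s \<omega>
  define Y where "Y \<omega> = (\<Sum>s\<in>Pow I. F s \<omega>)" for \<omega>
  define p where "p i = Pabs (m i) c" for i
  have Gm[measurable]: "G s i \<in> borel_measurable borel" for s i
    unfolding G_def by measurable
  have G0: "G s i z \<ge> 0" for s i z by (simp add: G_def)
  have lam0: "lam s \<ge> 0" for s using C by (simp add: lam_def)
  have Gb: "\<bar>G s i z\<bar> \<le> exp (lam s * (1 + \<bar>mm i\<bar>)) + 1" for s i z
  proof -
    have "exp (- lam s * (sgnp z - mm i) - (lam s)^2/2) \<le> exp (lam s * (1 + \<bar>mm i\<bar>)) + 1"
      using G_bound[OF lam0, of s z "mm i"] by linarith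
    moreover have "0 \<le> exp (lam s * (1 + \<bar>mm i\<bar>))" by simp
    ultimately show ?thesis unfolding G_def by auto
  qed
  have Gint: "integrable M (\<lambda>\<omega>. G s i (Z i \<omega>))" if "i \<in> I" for s i
    using that by (intro integrable_const_bound[where B="exp (lam s * (1 + \<bar>mm i\<bar>)) + 1"]) (auto simp: Gb)
  have indepG: "indep_vars (\<lambda>_. borel) (\<lambda>i \<omega>. G s i (Z i \<omega>)) I" for s
    by (rule indep_vars_compose2[OF indep]) simp
  have Fint: "integrable M (F s)" for s
    unfolding F_def using indep_vars_integrable[OF fin indepG Gint] .
  have EF: "integral\<^sup>L M (F s) = (\<Prod>i\<in>I. integral\<^sup>L M (\<lambda>\<omega>. G s i (Z i \<omega>)))" for s
    unfolding F_def using indep_vars_lebesgue_integral[OF fin indepG Gint] .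
  have EG: "integral\<^sup>L M (\<lambda>\<omega>. G s i (Z i \<omega>)) = integral\<^sup>L (Nlaw (m i)) (G s i)" if "i \<in> I" for s i
    using that by (subst law[symmetric]) (auto simp: integral_distr)
  have EG_le: "integral\<^sup>L M (\<lambda>\<omega>. G s i (Z i \<omega>)) \<le> (if i \<in> s then p i else 1 - p i)"
    if "i \<in> I" "s \<subseteq> I" for s i
  proof (cases "i \<in> s")
    case True
    have "finite s" using that fin finite_subset by blast
    then have "card s \<ge> 1" using True by (metis One_nat_def Suc_leI card_gt_0_iff empty_iff)
    then have l: "lam s > 0" using C by (simp add: lam_def)
    have Geq: "G s i = (\<lambda>z. if \<bar>z\<bar> > c then exp (- lam s * (sgnp z - mm i) - (lam s)^2/2) else 0)"
      using True by (simp add: G_def fun_eq_iff)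
    have "integral\<^sup>L M (\<lambda>\<omega>. G s i (Z i \<omega>)) = integral\<^sup>L (Nlaw (m i)) (G s i)" by (rule EG[OF that(1)])
    also have "\<dots> = integral\<^sup>L (Nlaw (m i)) (\<lambda>z. if \<bar>z\<bar> > c then exp (- lam s * (sgnp z - mm i) - (lam s)^2/2) else 0)"
      by (simp only: Geq)
    also have "\<dots> \<le> Pabs (m i) c" by (rule EG_in[OF l]) (simp add: mm_def)
    finally show ?thesis using True by (simp add: p_def)
  next
    case False
    have Geq: "G s i = (\<lambda>z. if \<bar>z\<bar> > c then 0 else 1)"
      using False by (simp add: G_def fun_eq_iff)
    have "integral\<^sup>L M (\<lambda>\<omega>. G s i (Z i \<omega>)) = integral\<^sup>L (Nlaw (m i)) (G s i)" by (rule EG[OF that(1)])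
    also have "\<dots> = 1 - Pabs (m i) c" unfolding Geq by (rule EG_out)
    finally show ?thesis using False by (simp add: p_def)
  qed
  have EF_le: "integral\<^sup>L M (F s) \<le> (\<Prod>i\<in>s. p i) * (\<Prod>i\<in>I-s. 1 - p i)" if "s \<subseteq> I" for s
  proof -
    have "integral\<^sup>L M (F s) \<le> (\<Prod>i\<in>I. (if i \<in> s then p i else 1 - p i))"
      unfolding EF by (intro prod_mono) (use EG_le that G0 in \<open>auto intro: integral_nonneg_AE\<close>)
    also have "\<dots> = (\<Prod>i\<in>I-s. (if i \<in> s then p i else 1 - p i)) * (\<Prod>i\<in>s. (if i \<in> s then p i else 1 - p i))"
      using that fin by (rule prod.subset_diff)
    also have "\<dots> = (\<Prod>i\<in>s. p i) * (\<Prod>i\<in>I-s. 1 - p i)"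
      by (simp add: mult.commute)
    finally show ?thesis .
  qed
  have EY: "integral\<^sup>L M Y \<le> 1"
  proof -
    have "integral\<^sup>L M Y = (\<Sum>s\<in>Pow I. integral\<^sup>L M (F s))"
      unfolding Y_def by (rule Bochner_Integration.integral_sum) (use Fint in auto)
    also have "\<dots> \<le> (\<Sum>s\<in>Pow I. (\<Prod>i\<in>s. p i) * (\<Prod>i\<in>I-s. 1 - p i))"
      by (intro sum_mono EF_le) auto
    also have "\<dots> = (\<Prod>i\<in>I. p i + (1 - p i))"
      using prod_add[OF fin, of p "\<lambda>i. 1 - p i"] by simp
    also have "\<dots> = 1" by simp
    finally show ?thesis .
  qed
  have Yint: "integrable M Y" unfolding Y_def using Fint by auto
  have Y0: "Y \<omega> \<ge> 0" for \<omega> unfolding Y_def F_def using G0 by (auto intro!: sum_nonneg prod_nonneg)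
  have Ym[measurable]: "Y \<in> borel_measurable M" using Yint by auto
  have key: "Y \<omega> \<ge> exp (C^2/2)" if "\<omega> \<in> ?A" for \<omega>
  proof -
    define s0 where "s0 = {i\<in>I. \<bar>Z i \<omega>\<bar> > c}"
    define K where "K = (\<Sum>i\<in>I. if \<bar>Z i \<omega>\<bar> > c then 1 else (0::real))"
    define D where "D = (\<Sum>i\<in>I. if \<bar>Z i \<omega>\<bar> > c then sgnp (Z i \<omega>) - mm i else 0)"
    have K: "K = real (card s0)" unfolding K_def s0_def by (rule sum_filter_real[OF fin])
    have D: "D = (\<Sum>i\<in>s0. sgnp (Z i \<omega>) - mm i)" unfolding D_def s0_def
      using fin by (simp add: sum.inter_filter)
    have K1: "K \<ge> 1" and DK: "D \<le> - C * sqrt K" using that unfolding K_def D_def mm_def by auto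
    have s0I: "s0 \<subseteq> I" by (auto simp: s0_def)
    have fs0: "finite s0" using fin s0I finite_subset by blast
    have lamK: "lam s0 = C / sqrt K" by (simp add: lam_def K)
    have sqK: "sqrt K > 0" using K1 by simp
    have "F s0 \<omega> = (\<Prod>i\<in>I-s0. G s0 i (Z i \<omega>)) * (\<Prod>i\<in>s0. G s0 i (Z i \<omega>))"
      unfolding F_def using s0I fin by (rule prod.subset_diff)
    also have "(\<Prod>i\<in>I-s0. G s0 i (Z i \<omega>)) = 1"
      by (intro prod.neutral) (auto simp: G_def s0_def)
    also have "(\<Prod>i\<in>s0. G s0 i (Z i \<omega>)) = (\<Prod>i\<in>s0. exp (- lam s0 * (sgnp (Z i \<omega>) - mm i) - (lam s0)^2/2))"
      by (intro prod.cong) (auto simp: G_def s0_def)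
    also have "\<dots> = exp (\<Sum>i\<in>s0. - lam s0 * (sgnp (Z i \<omega>) - mm i) - (lam s0)^2/2)"
      using fs0 by (simp add: exp_sum)
    also have "(\<Sum>i\<in>s0. - lam s0 * (sgnp (Z i \<omega>) - mm i) - (lam s0)^2/2) = - lam s0 * D - K * (lam s0)^2/2"
      unfolding D K by (simp add: sum_subtractf sum_distrib_left[symmetric] sum_negf)
    also have "K * (lam s0)^2/2 = C^2/2"
      unfolding lamK using sqK K1 by (simp add: power_divide field_simps)
    finally have F0: "F s0 \<omega> = exp (- lam s0 * D - C^2/2)" by simp
    have "- lam s0 * D \<ge> lam s0 * (C * sqrt K)"
      using mult_left_mono[OF DK lam0[of s0]] by simp
    also have "lam s0 * (C * sqrt K) = C^2" unfolding lamK using sqK by (simp add: power2_eq_square)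
    finally have "- lam s0 * D - C^2/2 \<ge> C^2/2" by (simp add: mult.commute)
    then have "exp (C^2/2) \<le> F s0 \<omega>" unfolding F0 by simp
    also have "F s0 \<omega> \<le> Y \<omega>" unfolding Y_def
      using s0I fin by (intro member_le_sum) (auto simp: F_def G0 prod_nonneg)
    finally show ?thesis .
  qed
  define f1 where "f1 \<omega> = (\<Sum>i\<in>I. (\<lambda>z. if \<bar>z\<bar> > c then 1 else (0::real)) (Z i \<omega>))" for \<omega>
  define f2 where "f2 \<omega> = (\<Sum>i\<in>I. (\<lambda>z. if \<bar>z\<bar> > c then sgnp z - (2 * Sfun (m i) c - 1) else 0) (Z i \<omega>))" for \<omega>
  have f1m[measurable]: "f1 \<in> borel_measurable M" unfolding f1_def
    by (intro borel_measurable_sum measurable_compose[OF rv]) auto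
  have f2m[measurable]: "f2 \<in> borel_measurable M" unfolding f2_def
    by (intro borel_measurable_sum measurable_compose[OF rv]) auto
  have Aeq: "?A = {\<omega>\<in>space M. f1 \<omega> \<ge> 1 \<and> f2 \<omega> \<le> - C * sqrt (f1 \<omega>)}"
    by (simp add: f1_def f2_def)
  have g1: "(\<lambda>\<omega>. - C * sqrt (f1 \<omega>)) \<in> borel_measurable M"
    by (intro borel_measurable_times borel_measurable_const measurable_compose[OF f1m borel_measurable_sqrt])
  have Am: "?A \<in> events" unfolding Aeq
    by (intro sets.sets_Collect_conj borel_measurable_le f1m f2m g1 borel_measurable_const)
  have "prob ?A \<le> prob {\<omega>\<in>space M. Y \<omega> \<ge> exp (C^2/2)}"
  proof (rule finite_measure_mono)
    show "{\<omega>\<in>space M. Y \<omega> \<ge> exp (C^2/2)} \<in> events"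
      by (intro borel_measurable_le Ym borel_measurable_const)
    show "?A \<subseteq> {\<omega>\<in>space M. Y \<omega> \<ge> exp (C^2/2)}"
    proof (rule subsetI)
      fix \<omega> assume h: "\<omega> \<in> ?A"
      then have "\<omega> \<in> space M" by blast
      then show "\<omega> \<in> {\<omega>\<in>space M. Y \<omega> \<ge> exp (C^2/2)}" using key[OF h] by blast
    qed
  qed
  also have "\<dots> \<le> integral\<^sup>L M Y / exp (C^2/2)"
    by (rule integral_Markov_inequality_measure[OF Yint Am]) (auto simp: Y0)
  also have "\<dots> \<le> 1 / exp (C^2/2)" using EY by (simp add: divide_right_mono)
  also have "\<dots> = exp (- (C^2)/2)" by (simp add: exp_minus field_simps)
  finally show ?thesis .
qed



lemma sum_selected:
  "(\<Sum>i\<in>selected z c t. hfun (1 - Phi (z i))) = (\<Sum>i\<in>{1..t}. if \<bar>z i\<bar> > c then sgnp (z i) else 0)"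
proof -
  have "(\<Sum>i\<in>selected z c t. hfun (1 - Phi (z i))) = (\<Sum>i\<in>{i\<in>{1..t}. \<bar>z i\<bar> > c}. sgnp (z i))"
    unfolding selected_def by (simp add: hfun_Phi sgnp_def)
  also have "\<dots> = (\<Sum>i\<in>{1..t}. if \<bar>z i\<bar> > c then sgnp (z i) else 0)"
    by (rule sum.inter_filter) simp
  finally show ?thesis .
qed

lemma card_selected:
  "real (card (selected z c t)) = (\<Sum>i\<in>{1..t}. if \<bar>z i\<bar> > c then 1 else 0)"
  unfolding selected_def by (rule sum_filter_real[symmetric]) simp

lemma rejects_alt:
  "rejects \<alpha> c z \<longleftrightarrow> (\<exists>t. \<exists>n::nat. (\<Sum>i\<in>{1..t}. if \<bar>z i\<bar> > c then 1 else 0) = real n \<and> n \<ge> 1 \<and>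
     Ccrit n \<alpha> * sqrt (real n) < (\<Sum>i\<in>{1..t}. if \<bar>z i\<bar> > c then sgnp (z i) else 0))"
  unfolding rejects_def Let_def card_selected[symmetric] sum_selected by auto

lemma rejects_meas:
  assumes rv: "\<And>i. i \<ge> 1 \<Longrightarrow> Z i \<in> borel_measurable M"
  shows "{\<omega>\<in>space M. rejects \<alpha> c (\<lambda>i. Z i \<omega>)} \<in> sets M"
proof -
  have f: "(\<lambda>\<omega>. \<Sum>i\<in>{1..t}. (\<lambda>z. if \<bar>z\<bar> > c then 1 else (0::real)) (Z i \<omega>)) \<in> borel_measurable M" for t
    by (intro borel_measurable_sum measurable_compose[OF rv]) auto
  have g: "(\<lambda>\<omega>. \<Sum>i\<in>{1..t}. (\<lambda>z. if \<bar>z\<bar> > c then sgnp z else 0) (Z i \<omega>)) \<in> borel_measurable M" for t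
    by (intro borel_measurable_sum measurable_compose[OF rv]) auto
  have "{\<omega>\<in>space M. \<exists>t. \<exists>n::nat. (\<Sum>i\<in>{1..t}. (\<lambda>z. if \<bar>z\<bar> > c then 1 else (0::real)) (Z i \<omega>)) = real n \<and> n \<ge> 1 \<and>
     Ccrit n \<alpha> * sqrt (real n) < (\<Sum>i\<in>{1..t}. (\<lambda>z. if \<bar>z\<bar> > c then sgnp z else 0) (Z i \<omega>))} \<in> sets M"
    by (intro sets.sets_Collect_countable_Ex sets.sets_Collect_conj borel_measurable_eq borel_measurable_less
        f g borel_measurable_const sets.sets_Collect_const)
  then show ?thesis unfolding rejects_alt by simp
qed



lemma Nlaw_ind_int: "integral\<^sup>L (Nlaw m) (\<lambda>z. if \<bar>z\<bar> > c then 1 else 0) = Pabs m c"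
proof -
  have "(\<lambda>z. if \<bar>z\<bar> > c then 1 else 0) = (\<lambda>z. (1::real) * indicator {x. \<bar>x\<bar> > c} z + 0 * indicator {} z)"
    by (auto simp: fun_eq_iff split: split_indicator)
  then show ?thesis by (simp add: Nlaw_int_two Pabs_def)
qed

lemma (in prob_space) hoeff_ind:
  fixes Z :: "nat \<Rightarrow> 'a \<Rightarrow> real"
  assumes fin: "finite J" and ne: "J \<noteq> {}" and indep: "indep_vars (\<lambda>_. borel) Z J"
    and law: "\<And>i. i \<in> J \<Longrightarrow> distr M borel (Z i) = Nlaw (m i)" and eps: "\<epsilon> \<ge> 0"
  shows "prob {\<omega>\<in>space M. (\<Sum>i\<in>J. if \<bar>Z i \<omega>\<bar> > c then 1 else 0) \<le> (\<Sum>i\<in>J. Pabs (m i) c) - \<epsilon>}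
           \<le> exp (-2 * \<epsilon>^2 / real (card J))"
    and "prob {\<omega>\<in>space M. (\<Sum>i\<in>J. if \<bar>Z i \<omega>\<bar> > c then 1 else 0) \<ge> (\<Sum>i\<in>J. Pabs (m i) c) + \<epsilon>}
           \<le> exp (-2 * \<epsilon>^2 / real (card J))"
proof -
  have rv: "Z i \<in> borel_measurable M" if "i \<in> J" for i
    using indep that unfolding indep_vars_def by auto
  define X where "X i \<omega> = (\<lambda>z. if \<bar>z\<bar> > c then 1 else (0::real)) (Z i \<omega>)" for i \<omega>
  have Xm: "X i \<in> borel_measurable M" if "i \<in> J" for i
    unfolding X_def by (intro measurable_compose[OF rv[OF that]]) auto
  have EX: "expectation (X i) = Pabs (m i) c" if "i \<in> J" for i
  proof -
    have "expectation (X i) = integral\<^sup>L (distr M borel (Z i)) (\<lambda>z. if \<bar>z\<bar> > c then 1 else (0::real))"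
      unfolding X_def by (subst integral_distr) (auto intro: rv[OF that])
    then show ?thesis using law[OF that] Nlaw_ind_int by simp
  qed
  interpret H: Hoeffding_ineq M J X "\<lambda>_. 0" "\<lambda>_. 1" "\<Sum>i\<in>J. expectation (X i)"
  proof unfold_locales
    show "indep_vars (\<lambda>_. borel) X J" unfolding X_def
      by (rule indep_vars_compose2[OF indep]) auto
  qed (auto simp: fin X_def)
  have mu: "(\<Sum>i\<in>J. expectation (X i)) = (\<Sum>i\<in>J. Pabs (m i) c)" using EX by simp
  have d: "(\<Sum>i\<in>J. ((\<lambda>_. 1::real) i - (\<lambda>_. 0) i)^2) = real (card J)" by simp
  have dpos: "(\<Sum>i\<in>J. ((\<lambda>_. 1::real) i - (\<lambda>_. 0) i)^2) > 0" using fin ne by (simp add: card_gt_0_iff)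
  show "prob {\<omega>\<in>space M. (\<Sum>i\<in>J. if \<bar>Z i \<omega>\<bar> > c then 1 else 0) \<le> (\<Sum>i\<in>J. Pabs (m i) c) - \<epsilon>}
           \<le> exp (-2 * \<epsilon>^2 / real (card J))"
    using H.Hoeffding_ineq_le[OF eps dpos] unfolding mu d by (simp add: X_def)
  show "prob {\<omega>\<in>space M. (\<Sum>i\<in>J. if \<bar>Z i \<omega>\<bar> > c then 1 else 0) \<ge> (\<Sum>i\<in>J. Pabs (m i) c) + \<epsilon>}
           \<le> exp (-2 * \<epsilon>^2 / real (card J))"
    using H.Hoeffding_ineq_ge[OF eps dpos] unfolding mu d by (simp add: X_def)
qed



theorem theorem9:
  fixes M :: "'a measure" and Z :: "nat \<Rightarrow> 'a \<Rightarrow> real" and r :: "nat \<Rightarrow> nat"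
    and \<mu> \<alpha> \<beta> c :: real
  assumes "prob_space M"
    and "prob_space.indep_vars M (\<lambda>_. borel) Z {1..}"
    and "\<And>i. i \<ge> 1 \<Longrightarrow> distributed M lborel (Z i) (normal_density (\<mu> * real (r i)) 1)"
    and "\<And>i. r i \<in> {0, 1}"
    and "\<mu> > 0"
    and "0 < \<alpha>" "\<alpha> < 1" "0 < \<beta>" "\<beta> < 1"
    and "\<exists>k::nat. k \<ge> 1 \<and>
      (2 * Sfun \<mu> c - 1) * (N1 r k - Ccrit k (\<beta>/3) * sqrt (N1 r k) / (2 * Pabs \<mu> c))
      \<ge> (Ccrit k \<alpha> + Ccrit k (\<beta>/3)) / sqrt (Pabs \<mu> c) *
        sqrt (N1 r k + N0 r k / Dfun \<mu> c + Ccrit k (\<beta>/3) * sqrt (real k) / (2 * Pabs \<mu> c))"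
  shows "measure M {\<omega> \<in> space M. rejects \<alpha> c (\<lambda>i. Z i \<omega>)} \<ge> 1 - \<beta>"
proof -
  interpret prob_space M by fact
  note indepA = assms(2) and distA = assms(3) and r01 = assms(4) and mu = assms(5)
  obtain k :: nat where k1: "k \<ge> 1" and cond:
      "(2 * Sfun \<mu> c - 1) * (N1 r k - Ccrit k (\<beta>/3) * sqrt (N1 r k) / (2 * Pabs \<mu> c))
      \<ge> (Ccrit k \<alpha> + Ccrit k (\<beta>/3)) / sqrt (Pabs \<mu> c) *
        sqrt (N1 r k + N0 r k / Dfun \<mu> c + Ccrit k (\<beta>/3) * sqrt (real k) / (2 * Pabs \<mu> c))"
    using assms(10) by blast
  define \<gamma> where "\<gamma> = \<beta>/3"
  have g: "0 < \<gamma>" "\<gamma> < 1" using assms(8,9) by (auto simp: \<gamma>_def)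
  define C where "C = Ccrit k \<gamma>"
  define Ca where "Ca = Ccrit k \<alpha>"
  have C0: "C > 0" unfolding C_def by (rule Ccrit_pos[OF k1 g])
  have Ca0: "Ca > 0" unfolding Ca_def by (rule Ccrit_pos[OF k1 assms(6,7)])
  have Cexp: "exp (- (C^2)/2) \<le> \<gamma>" unfolding C_def using Ccrit_exp[OF k1 g] by simp
  define I where "I = {1..k}"
  define I1 where "I1 = {i\<in>I. r i = 1}"
  define m where "m i = \<mu> * real (r i)" for i
  define P where "P = Pabs \<mu> c"
  define P0 where "P0 = Pabs 0 c"
  define S where "S = Sfun \<mu> c"
  have P: "P > 0" unfolding P_def by (rule Pabs_pos)
  have P0: "P0 > 0" unfolding P0_def by (rule Pabs_pos)
  have finI: "finite I" "finite I1" by (auto simp: I_def I1_def)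
  have I1I: "I1 \<subseteq> I" by (auto simp: I1_def)
  have cardI: "card I = k" by (simp add: I_def)
  have rvall: "Z i \<in> borel_measurable M" if "i \<ge> 1" for i
    using distributed_measurable[OF distA[OF that]] by simp
  have law: "distr M borel (Z i) = Nlaw (m i)" if "i \<in> I" for i
  proof -
    have "i \<ge> 1" using that by (simp add: I_def)
    have "distr M borel (Z i) = distr M lborel (Z i)" by (rule distr_cong) auto
    also have "\<dots> = Nlaw (m i)"
      using distributed_distr_eq_density[OF distA[OF \<open>i \<ge> 1\<close>]] by (simp add: Nlaw_def m_def)
    finally show ?thesis .
  qed
  have indepI: "indep_vars (\<lambda>_. borel) Z I" by (rule indep_vars_subset[OF indepA]) (auto simp: I_def)
  have indepI1: "indep_vars (\<lambda>_. borel) Z I1" by (rule indep_vars_subset[OF indepI I1I])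
  have m1: "m i = \<mu>" if "i \<in> I1" for i using that by (simp add: I1_def m_def)
  have m0: "m i = 0" if "i \<in> I" "i \<notin> I1" for i
  proof -
    have "r i = 0" using that r01[of i] by (auto simp: I1_def)
    then show ?thesis by (simp add: m_def)
  qed
  have N1eq: "N1 r k = real (card I1)"
  proof -
    have "N1 r k = (\<Sum>i\<in>I. if r i = 1 then 1 else 0)"
      unfolding N1_def I_def by (intro sum.cong refl) (use r01 in \<open>auto\<close>)
    also have "\<dots> = real (card I1)" unfolding I1_def by (rule sum_filter_real) (simp add: I_def)
    finally show ?thesis .
  qed
  have N0eq: "N0 r k = real k - N1 r k"
    unfolding N0_def N1_def by (simp add: sum_subtractf)
  have sumP: "(\<Sum>i\<in>I. Pabs (m i) c) = N1 r k * P + N0 r k * P0"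
  proof -
    have "(\<Sum>i\<in>I. Pabs (m i) c) = (\<Sum>i\<in>I. if i \<in> I1 then P else P0)"
      using m1 m0 by (intro sum.cong refl) (auto simp: P_def P0_def)
    also have "\<dots> = real (card I1) * P + real (card (I - I1)) * P0"
      using finI I1I by (simp add: sum.If_cases Int_absorb1 Diff_eq[symmetric] )
    also have "real (card (I - I1)) = real k - real (card I1)"
      using finI I1I cardI card_mono[OF finI(1) I1I] by (simp add: card_Diff_subset of_nat_diff)
    finally show ?thesis using N0eq N1eq by simp
  qed
  have sumP1: "(\<Sum>i\<in>I1. Pabs (m i) c) = N1 r k * P"
    using m1 N1eq by (simp add: P_def)

  have S_half: "S \<ge> 1/2" unfolding S_def using mu by (intro Sfun_half) simp
  have N1nn: "N1 r k \<ge> 0" using N1eq by simp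
  have N0nn: "N0 r k \<ge> 0" unfolding N0_def using r01 by (intro sum_nonneg) (metis insert_iff singletonD of_nat_0 of_nat_1 diff_ge_0_iff_ge order_refl zero_le_one)
  have Dpos: "Dfun \<mu> c = P / P0" by (simp add: Dfun_def P_def P0_def)
  define T where "T = N1 r k + N0 r k / Dfun \<mu> c + C * sqrt (real k) / (2 * P)"
  define Q where "Q = N1 r k * P + N0 r k * P0 + C * sqrt (real k) / 2"
  have Tpos: "T > 0"
  proof -
    have "N0 r k / Dfun \<mu> c \<ge> 0" using N0nn P P0 Dpos by simp
    moreover have "C * sqrt (real k) / (2 * P) > 0" using C0 P k1 by simp
    ultimately show ?thesis using N1nn by (simp add: T_def)
  qed
  have QT: "Q = P * T" unfolding Q_def T_def Dpos using P P0 by (simp add: field_simps)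
  have cond': "(2 * S - 1) * (N1 r k - C * sqrt (N1 r k) / (2 * P)) \<ge> (Ca + C) / sqrt P * sqrt T"
    using cond unfolding S_def C_def Ca_def \<gamma>_def T_def P_def by simp
  have RHSpos: "(Ca + C) / sqrt P * sqrt T > 0" using Ca0 C0 P Tpos by simp
  have LHSpos: "(2 * S - 1) * (N1 r k - C * sqrt (N1 r k) / (2 * P)) > 0" using cond' RHSpos by linarith
  have S1: "2 * S - 1 > 0"
  proof (rule ccontr)
    assume "\<not> 2 * S - 1 > 0"
    then have "2 * S - 1 = 0" using S_half by simp
    then show False using LHSpos by simp
  qed
  have "N1 r k - C * sqrt (N1 r k) / (2 * P) > 0" using LHSpos S1 by (simp add: zero_less_mult_iff)
  then have "N1 r k > 0" using C0 P N1nn by (cases "N1 r k = 0") auto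
  then have I1ne: "I1 \<noteq> {}" using N1eq by auto
  have key_ineq: "(2 * S - 1) * (N1 r k * P - C * sqrt (N1 r k) / 2) \<ge> (Ca + C) * sqrt Q"
  proof -
    have "(2 * S - 1) * (N1 r k * P - C * sqrt (N1 r k) / 2) = P * ((2 * S - 1) * (N1 r k - C * sqrt (N1 r k) / (2 * P)))"
      using P by (simp add: field_simps)
    also have "\<dots> \<ge> P * ((Ca + C) / sqrt P * sqrt T)" using cond' P by (intro mult_left_mono) auto
    also have "P * ((Ca + C) / sqrt P * sqrt T) = (Ca + C) * (sqrt P * sqrt T)"
    proof -
      have e: "P * ((Ca + C) / sqrt P * sqrt T) = (Ca + C) * sqrt T * (P / sqrt P)"
        by (simp add: algebra_simps divide_inverse)
      show ?thesis unfolding e real_div_sqrt[OF less_imp_le[OF P]] by (simp add: algebra_simps)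
    qed
    also have "sqrt P * sqrt T = sqrt Q" by (simp add: QT real_sqrt_mult)
    finally show ?thesis by simp
  qed
  have smeas: "(\<lambda>\<omega>. \<Sum>i\<in>J. H i (Z i \<omega>)) \<in> borel_measurable M"
    if "J \<subseteq> I" "\<And>i. H i \<in> borel_measurable borel" for J and H :: "nat \<Rightarrow> real \<Rightarrow> real"
  proof (rule borel_measurable_sum)
    fix i assume "i \<in> J" then have "i \<ge> 1" using that by (auto simp: I_def)
    show "(\<lambda>\<omega>. H i (Z i \<omega>)) \<in> borel_measurable M" by (rule measurable_compose[OF rvall[OF \<open>i \<ge> 1\<close>] that(2)])
  qed
  define n1 where "n1 \<omega> = (\<Sum>i\<in>I1. if \<bar>Z i \<omega>\<bar> > c then 1 else (0::real))" for \<omega>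
  define K where "K \<omega> = (\<Sum>i\<in>I. if \<bar>Z i \<omega>\<bar> > c then 1 else (0::real))" for \<omega>
  define Dv where "Dv \<omega> = (\<Sum>i\<in>I. if \<bar>Z i \<omega>\<bar> > c then sgnp (Z i \<omega>) - (2 * Sfun (m i) c - 1) else 0)" for \<omega>
  have n1m: "n1 \<in> borel_measurable M" unfolding n1_def
    using smeas[OF I1I, of "\<lambda>i z. if \<bar>z\<bar> > c then 1 else 0"] by simp
  have Km: "K \<in> borel_measurable M" unfolding K_def
    using smeas[of I "\<lambda>i z. if \<bar>z\<bar> > c then 1 else 0"] by simp
  have Dvm: "Dv \<in> borel_measurable M" unfolding Dv_def
    using smeas[of I "\<lambda>i z. if \<bar>z\<bar> > c then sgnp z - (2 * Sfun (m i) c - 1) else 0"] by simp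
  define A1 where "A1 = {\<omega>\<in>space M. n1 \<omega> \<le> N1 r k * P - C * sqrt (N1 r k) / 2}"
  define A2 where "A2 = {\<omega>\<in>space M. K \<omega> \<ge> Q}"
  define A3 where "A3 = {\<omega>\<in>space M. K \<omega> \<ge> 1 \<and> Dv \<omega> \<le> - C * sqrt (K \<omega>)}"
  have A1m: "A1 \<in> events" unfolding A1_def by (intro borel_measurable_le n1m borel_measurable_const)
  have A2m: "A2 \<in> events" unfolding A2_def by (intro borel_measurable_le Km borel_measurable_const)
  have A3m: "A3 \<in> events" unfolding A3_def
    by (intro sets.sets_Collect_conj borel_measurable_le Km Dvm borel_measurable_const
        borel_measurable_times measurable_compose[OF Km borel_measurable_sqrt])
  have pA1: "prob A1 \<le> \<gamma>"
  proof -
    have eps: "C * sqrt (N1 r k) / 2 \<ge> 0" using C0 N1nn by simp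
    have law1: "distr M borel (Z i) = Nlaw (m i)" if "i \<in> I1" for i using law that I1I by auto
    have "prob A1 \<le> exp (-2 * (C * sqrt (N1 r k) / 2)^2 / real (card I1))"
      using hoeff_ind(1)[OF finI(2) I1ne indepI1 law1 eps, where c=c] unfolding A1_def n1_def sumP1 by simp
    also have "-2 * (C * sqrt (N1 r k) / 2)^2 / real (card I1) = - (C^2)/2"
      using \<open>N1 r k > 0\<close> N1eq by (simp add: power_mult_distrib power_divide field_simps)
    finally show ?thesis using Cexp by simp
  qed
  have pA2: "prob A2 \<le> \<gamma>"
  proof -
    have eps: "C * sqrt (real k) / 2 \<ge> 0" using C0 by simp
    have ne: "I \<noteq> {}" using k1 by (auto simp: I_def)
    have "prob A2 \<le> exp (-2 * (C * sqrt (real k) / 2)^2 / real (card I))"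
      using hoeff_ind(2)[OF finI(1) ne indepI law eps, where c=c] unfolding A2_def K_def sumP Q_def by (simp add: add.assoc)
    also have "-2 * (C * sqrt (real k) / 2)^2 / real (card I) = - (C^2)/2"
      using k1 cardI by (simp add: power_mult_distrib power_divide field_simps)
    finally show ?thesis using Cexp by simp
  qed
  have pA3: "prob A3 \<le> \<gamma>"
  proof -
    have "prob A3 \<le> exp (- (C^2)/2)"
      using A3_bound[OF finI(1) indepI law C0, where c=c] unfolding A3_def K_def Dv_def by simp
    then show ?thesis using Cexp by simp
  qed
  define R where "R = {\<omega> \<in> space M. rejects \<alpha> c (\<lambda>i. Z i \<omega>)}"
  have Rm: "R \<in> events" unfolding R_def by (rule rejects_meas) (rule rvall)
  have sub: "space M - (A1 \<union> A2 \<union> A3) \<subseteq> R"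
  proof
    fix \<omega> assume h: "\<omega> \<in> space M - (A1 \<union> A2 \<union> A3)"
    then have sp: "\<omega> \<in> space M" and nA1: "\<omega> \<notin> A1" and nA2: "\<omega> \<notin> A2" and nA3: "\<omega> \<notin> A3" by auto
    define s0 where "s0 = {i\<in>I. \<bar>Z i \<omega>\<bar> > c}"
    have n1gt: "n1 \<omega> > N1 r k * P - C * sqrt (N1 r k) / 2" using nA1 sp by (auto simp: A1_def)
    have Klt: "K \<omega> < Q" using nA2 sp by (auto simp: A2_def)
    have Ks0: "K \<omega> = real (card s0)" unfolding K_def s0_def by (rule sum_filter_real[OF finI(1)])
    have K0: "K \<omega> \<ge> 0" using Ks0 by simp
    have n1K: "n1 \<omega> \<le> K \<omega>" unfolding n1_def K_def using finI I1I by (intro sum_mono2) auto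
    have "(Ca + C) * sqrt Q \<le> (2 * S - 1) * (N1 r k * P - C * sqrt (N1 r k) / 2)" by (rule key_ineq)
    also have "\<dots> < (2 * S - 1) * n1 \<omega>"
      using n1gt S1 by simp
    finally have big: "(2 * S - 1) * n1 \<omega> > (Ca + C) * sqrt Q" .
    have "(Ca + C) * sqrt (K \<omega>) \<le> (Ca + C) * sqrt Q" using Klt Ca0 C0 by (intro mult_left_mono) auto
    with big have big2: "(2 * S - 1) * n1 \<omega> > (Ca + C) * sqrt (K \<omega>)" by linarith
    have "(Ca + C) * sqrt (K \<omega>) \<ge> 0" using Ca0 C0 K0 by simp
    then have "(2 * S - 1) * n1 \<omega> > 0" using big2 by linarith
    then have "n1 \<omega> > 0" using S1 by (simp add: zero_less_mult_iff)
    then have "K \<omega> > 0" using n1K by linarith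
    then have cs0: "card s0 \<ge> 1" using Ks0 by simp
    then have K1: "K \<omega> \<ge> 1" using Ks0 by simp
    have Dgt: "Dv \<omega> > - C * sqrt (K \<omega>)" using nA3 sp K1 by (auto simp: A3_def)
    have mmsum: "(\<Sum>i\<in>I. if \<bar>Z i \<omega>\<bar> > c then 2 * Sfun (m i) c - 1 else 0) = (2 * S - 1) * n1 \<omega>"
    proof -
      have "(\<Sum>i\<in>I. if \<bar>Z i \<omega>\<bar> > c then 2 * Sfun (m i) c - 1 else 0)
          = (\<Sum>i\<in>I. if i \<in> I1 then (2 * S - 1) * (if \<bar>Z i \<omega>\<bar> > c then 1 else 0) else 0)"
        using m1 m0 by (intro sum.cong refl) (auto simp: S_def Sfun0)
      also have "\<dots> = (\<Sum>i\<in>I \<inter> I1. (2 * S - 1) * (if \<bar>Z i \<omega>\<bar> > c then 1 else 0))"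
        by (rule sum.inter_restrict[OF finI(1), symmetric])
      also have "I \<inter> I1 = I1" using I1I by auto
      finally show ?thesis by (simp add: n1_def sum_distrib_left)
    qed
    have sg: "(\<Sum>i\<in>I. if \<bar>Z i \<omega>\<bar> > c then sgnp (Z i \<omega>) else 0) = Dv \<omega> + (2 * S - 1) * n1 \<omega>"
      unfolding Dv_def mmsum[symmetric] sum.distrib[symmetric] by (intro sum.cong) auto
    have cs0k: "card s0 \<le> k" using card_mono[OF finI(1), of s0] cardI by (auto simp: s0_def)
    have "Ccrit (card s0) \<alpha> * sqrt (real (card s0)) \<le> Ca * sqrt (K \<omega>)"
      unfolding Ca_def Ks0 using Ccrit_mono[OF cs0 cs0k] by (intro mult_right_mono) auto
    also have "Ca * sqrt (K \<omega>) < (\<Sum>i\<in>I. if \<bar>Z i \<omega>\<bar> > c then sgnp (Z i \<omega>) else 0)"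
      unfolding sg using Dgt big2 by (simp add: algebra_simps)
    finally have fin_ineq: "Ccrit (card s0) \<alpha> * sqrt (real (card s0)) < (\<Sum>i\<in>I. if \<bar>Z i \<omega>\<bar> > c then sgnp (Z i \<omega>) else 0)" .
    have "rejects \<alpha> c (\<lambda>i. Z i \<omega>)"
      unfolding rejects_alt
      using fin_ineq cs0 Ks0 unfolding K_def I_def by blast
    then show "\<omega> \<in> R" using sp by (simp add: R_def)
  qed
  have "prob (A1 \<union> A2 \<union> A3) \<le> prob A1 + prob A2 + prob A3"
    using A1m A2m A3m by (meson add_right_mono measure_Un_le order.trans sets.Un)
  also have "\<dots> \<le> \<beta>" using pA1 pA2 pA3 by (simp add: \<gamma>_def)
  finally have pU: "prob (A1 \<union> A2 \<union> A3) \<le> \<beta>" .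
  have "1 - \<beta> \<le> prob (space M - (A1 \<union> A2 \<union> A3))"
    using pU A1m A2m A3m by (subst prob_compl) auto
  also have "\<dots> \<le> prob R" using sub Rm by (intro finite_measure_mono) auto
  finally show ?thesis by (simp add: R_def)
qed


end
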